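(* Let $f:\mathcal X\to\mathbb{R}$ have $\ell_2$-sensitivity $\Delta_2$, and let $\mathcal G_\rho(x)=f(x)+\mathcal N(0,\tfrac{\Delta_2^2}{2\rho})$ be the Gaussian mechanism. Consider the following stateful procedure on input $x\in\mathcal X$: initialize $M=\{(0,\infty),(\infty,f(x))\}$; on receiving a parameter $\rho>0$: find $(\rho_k,Y_{\rho_k}),(\rho_{k+1},Y_{\rho_{k+1}})\in M$ with $\rho\in[\rho_k,\rho_{k+1})$ and no $(\rho',\cdot)\in M$ with $\rho'\in(\rho_k,\rho_{k+1})$; sample fresh independent $Z_\rho\sim\mathcal N\!\left(0,\Delta_2^2\tfrac{(1-\rho_k/\rho)(1/\rho-1/\rho_{k+1})}{2(1-\rho_k/\rho_{k+1})}\right)$; set $$Y_\rho=Z_\rho+\frac{(1-\rho_k/\rho)Y_{\rho_{k+1}}+(\rho_k/\rho-\rho_k/\rho_{k+1})Y_{\rho_k}}{1-\rho_k/\rho_{k+1}},$$ add $(\rho,Y_\rho)$ to $M$ and output $Y_\rho$ (conventions: if $\rho_{k+1}=\infty$ then $\rho_k/\rho_{k+1}=1/\rho_{k+1}=0$; if $\rho_k=0$ the term involving $Y_{\rho_k}$ is omitted). Then this procedure implements $(\mathcal G_\rho)_{\rho>0}$ with lossless multiple release.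
   Context: Lossless multiple release: let $(\mathcal M_\rho)_{\rho>0}$, $\mathcal M_\rho:\mathcal X\to\mathcal Y$, be a family of randomized mechanisms. An implementation is a randomized stateful procedure $\textsc M$ which, given $x\in\mathcal X$, receives privacy parameters $\rho\in\mathbb{R}_+$ one at a time in arbitrary order and outputs a value $\textsc M(x,\rho)\in\mathcal Y$ for each. $\textsc M$ implements $(\mathcal M_\rho)$ with lossless multiple release if for every $x\in\mathcal X$: (1) for every $\rho$, $\textsc M(x,\rho)$ has the same distribution as $\mathcal M_\rho(x)$; (2) for every finite $S\subset\mathbb{R}_+$ processed in arbitrary order and every $y\in\mathcal Y$, conditioned on $\textsc M(x,\max S)=y$, the joint distribution of $(\textsc M(x,\rho))_{\rho\in S}$ is uniquely determined by $y$ and $S$ (it does not depend on $x$). The $\ell_2$-sensitivity of $f$ is $\max\|f(x)-f(x')\|_2$ over neighboring datasets $x,x'$. *)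

theory Defs
  imports "HOL-Probability.Probability"
begin

definition gauss :: "real \<Rightarrow> real \<Rightarrow> real measure" where
  "gauss mu v = (if v \<le> 0 then return borel mu
                 else density lborel (normal_density mu (sqrt v)))"

definition has_l2_sensitivity :: "('x \<Rightarrow> 'x \<Rightarrow> bool) \<Rightarrow> ('x \<Rightarrow> real) \<Rightarrow> real \<Rightarrow> bool" where
  "has_l2_sensitivity nbr f D \<longleftrightarrow>
     (\<forall>x x'. nbr x x' \<longrightarrow> \<bar>f x - f x'\<bar> \<le> D) \<and> (\<exists>x x'. nbr x x' \<and> \<bar>f x - f x'\<bar> = D)"

definition gauss_mech :: "real \<Rightarrow> ('x \<Rightarrow> real) \<Rightarrow> real \<Rightarrow> 'x \<Rightarrow> real measure" where
  "gauss_mech D f rho x = gauss (f x) (D\<^sup>2 / (2 * rho))"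

text \<open>P is the (finite) set of already processed parameters,
  Y their released values, fx = f(x) (the value attached to rho = infinity), rho the new
  parameter.  lo / hi are rho_k / rho_(k+1); None encodes rho_k = 0 resp. rho_(k+1) = infinity.\<close>
definition step_law :: "real \<Rightarrow> real \<Rightarrow> real set \<Rightarrow> (real \<Rightarrow> real) \<Rightarrow> real \<Rightarrow> real measure" where
  "step_law D fx P Y rho =
     (let lo = (if \<exists>r\<in>P. r \<le> rho then Some (Max {r\<in>P. r \<le> rho}) else None);
          hi = (if \<exists>r\<in>P. rho < r then Some (Min {r\<in>P. rho < r}) else None);
          a  = (case lo of None \<Rightarrow> 0 | Some rk \<Rightarrow> rk / rho);
          b  = (case (lo, hi) of (Some rk, Some rk1) \<Rightarrow> rk / rk1 | _ \<Rightarrow> 0);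
          c  = (case hi of None \<Rightarrow> 0 | Some rk1 \<Rightarrow> 1 / rk1);
          Yhi = (case hi of None \<Rightarrow> fx | Some rk1 \<Rightarrow> Y rk1);
          lo_term = (case lo of None \<Rightarrow> 0 | Some rk \<Rightarrow> (a - b) * Y rk);
          mean = ((1 - a) * Yhi + lo_term) / (1 - b);
          var = D\<^sup>2 * ((1 - a) * (1 / rho - c)) / (2 * (1 - b))
      in gauss mean var)"

text \<open>Joint law of all outputs after processing the parameters in the given order
  (list given in reverse processing order); outputs indexed by the parameter.\<close>
primrec gauss_proc_rev :: "real \<Rightarrow> real \<Rightarrow> real list \<Rightarrow> (real \<Rightarrow> real) measure" where
  "gauss_proc_rev D fx [] = return (PiM {} (\<lambda>_. borel)) (\<lambda>_. undefined)"
| "gauss_proc_rev D fx (rho # rs) =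
     bind (gauss_proc_rev D fx rs)
       (\<lambda>Y. distr (step_law D fx (set rs) Y rho) (PiM (insert rho (set rs)) (\<lambda>_. borel))
                   (\<lambda>y. Y(rho := y)))"

definition gauss_proc :: "real \<Rightarrow> ('x \<Rightarrow> real) \<Rightarrow> 'x \<Rightarrow> real list \<Rightarrow> (real \<Rightarrow> real) measure" where
  "gauss_proc D f x rs = gauss_proc_rev D (f x) (rev rs)"

definition lossless_multiple_release ::
  "('x \<Rightarrow> real list \<Rightarrow> (real \<Rightarrow> real) measure) \<Rightarrow> (real \<Rightarrow> 'x \<Rightarrow> real measure) \<Rightarrow> bool" where
  "lossless_multiple_release proc mech \<longleftrightarrow>
     (\<forall>x rs rho. distinct rs \<and> (\<forall>r\<in>set rs. 0 < r) \<and> rho \<in> set rs \<longrightarrow>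
        distr (proc x rs) borel (\<lambda>Y. Y rho) = mech rho x) \<and>
     (\<exists>K :: real set \<Rightarrow> real \<Rightarrow> (real \<Rightarrow> real) measure.
        (\<forall>S. K S \<in> borel \<rightarrow>\<^sub>M prob_algebra (PiM S (\<lambda>_. borel))) \<and>
        (\<forall>x rs. distinct rs \<and> rs \<noteq> [] \<and> (\<forall>r\<in>set rs. 0 < r) \<longrightarrow>
           proc x rs = bind (distr (proc x rs) borel (\<lambda>Y. Y (Max (set rs)))) (K (set rs))))"

end

theory Submission
  imports Defs
begin

lemma gauss_space: "gauss m v \<in> space (prob_algebra borel)"
  unfolding gauss_def space_prob_algebra
  by (auto simp: prob_space_return prob_space_normal_density)

lemma gauss_shift: "gauss m v = distr (gauss 0 v) borel (\<lambda>z. m + z)"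
proof (cases "v \<le> 0")
  case True then show ?thesis by (simp add: gauss_def distr_return)
next
  case False
  interpret prob_space "density lborel (normal_density 0 (sqrt v))" using False by (intro prob_space_normal_density) auto
  have "distributed (density lborel (normal_density 0 (sqrt v))) lborel (\<lambda>x. x) (normal_density 0 (sqrt v))"
    by (auto simp: distributed_def distr_id2)
  from normal_density_affine[OF this, of 1 m]
  have "distributed (density lborel (normal_density 0 (sqrt v))) lborel (\<lambda>x. m + x) (normal_density m (sqrt v))"
    using False by simp
  then have "distr (density lborel (normal_density 0 (sqrt v))) lborel (\<lambda>x. m + x) = density lborel (normal_density m (sqrt v))"
    by (simp add: distributed_def)
  then show ?thesis using False by (simp add: gauss_def cong: distr_cong)
qed

lemma nn_integral_gauss:
  assumes "0 < v" "f \<in> borel_measurable borel"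
  shows "(\<integral>\<^sup>+y. f y \<partial>gauss m v) = (\<integral>\<^sup>+y. ennreal (normal_density m (sqrt v) y) * f y \<partial>lborel)"
  using assms by (simp add: gauss_def nn_integral_density)

definition loP :: "real set \<Rightarrow> real \<Rightarrow> real option" where
  "loP P r = (if \<exists>x\<in>P. x \<le> r then Some (Max {x\<in>P. x \<le> r}) else None)"
definition hiP :: "real set \<Rightarrow> real \<Rightarrow> real option" where
  "hiP P r = (if \<exists>x\<in>P. r < x then Some (Min {x\<in>P. r < x}) else None)"
definition alP where "alP P r = (case loP P r of None \<Rightarrow> 0 | Some l \<Rightarrow> l)"
definition cP where "cP P r = (case hiP P r of None \<Rightarrow> 0 | Some h \<Rightarrow> 1 / h)"
definition YL :: "real set \<Rightarrow> (real \<Rightarrow> real) \<Rightarrow> real \<Rightarrow> real" where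
  "YL P Y r = (case loP P r of None \<Rightarrow> 0 | Some l \<Rightarrow> Y l)"
definition YH :: "real \<Rightarrow> real set \<Rightarrow> (real \<Rightarrow> real) \<Rightarrow> real \<Rightarrow> real" where
  "YH fx P Y r = (case hiP P r of None \<Rightarrow> fx | Some h \<Rightarrow> Y h)"
definition mF :: "real\<Rightarrow>real\<Rightarrow>real\<Rightarrow>real\<Rightarrow>real\<Rightarrow>real" where
 "mF al c L H r = ((1-al/r)*H+(al/r-al*c)*L)/(1-al*c)"
definition vF :: "real\<Rightarrow>real\<Rightarrow>real\<Rightarrow>real" where
 "vF al c r = (1-al/r)*(1/r-c)/(1-al*c)"
definition muS where "muS fx P Y r = mF (alP P r) (cP P r) (YL P Y r) (YH fx P Y r) r"
definition vS where "vS D P r = D\<^sup>2/2 * vF (alP P r) (cP P r) r"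

lemma step_law_eq: "step_law D fx P Y r = gauss (muS fx P Y r) (vS D P r)"
proof -
  show ?thesis
    apply (unfold step_law_def Let_def)
    apply (fold loP_def hiP_def)
    apply (unfold muS_def vS_def mF_def vF_def alP_def cP_def YL_def YH_def)
    by (cases "loP P r"; cases "hiP P r") (simp_all add: mult.commute)
qed

lemma q1:
  fixes A B T u w l :: real
  shows "(T*u - A*l)^2 * B*(A-B)*(T-B) + (A*w - B*u)^2 * T*(T-A)*(T-B)
       = (T*w - B*l)^2 * A*(T-A)*(A-B) + ((T-B)*u - (T-A)*w - (A-B)*l)^2 * A*B*T"
  by algebra

lemma g: "(Z::real) \<noteq> 0 \<Longrightarrow> (X/Z)^2/(s*(P/Z)) = X^2/(s*Z*P)"
  by (simp add: power2_eq_square field_simps)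

lemma cancel_help: "(m::real) \<noteq> 0 \<Longrightarrow> X*m = K \<Longrightarrow> a/X = (a*m)/K"
  by auto

lemma q2:
  fixes A B T u w l s :: real
  assumes "0 < B" "B < A" "A < T" "0 < s"
  shows "(u - A*l/T)^2/(s*((T-A)*A/T)) + (w - B/A*u)^2/(s*((A-B)*B/A))
       = (w - B*l/T)^2/(s*((T-B)*B/T)) + (u - (w + (A-B)/(T-B)*(l-w)))^2/(s*((T-A)*(A-B)/(T-B)))"
proof -
  have p: "0 < A" "0 < T" "0 < T - A" "0 < A - B" "0 < T - B" using assms by auto
  have e1: "(u - A*l/T)^2/(s*((T-A)*A/T)) = (T*u - A*l)^2 / (s*T*(T-A)*A)"
    using p assms by (simp add: field_simps power2_eq_square)
  have e2: "(w - B/A*u)^2/(s*((A-B)*B/A)) = (A*w - B*u)^2 / (s*A*(A-B)*B)"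
    using p assms by (simp add: field_simps power2_eq_square)
  have e3: "(w - B*l/T)^2/(s*((T-B)*B/T)) = (T*w - B*l)^2 / (s*T*(T-B)*B)"
    using p assms by (simp add: field_simps power2_eq_square)
  have d: "u - (w + (A-B)/(T-B)*(l-w)) = ((T-B)*u - (T-A)*w - (A-B)*l)/(T-B)"
    using p by (simp add: field_simps)
  have e4: "(u - (w + (A-B)/(T-B)*(l-w)))^2/(s*((T-A)*(A-B)/(T-B))) = ((T-B)*u - (T-A)*w - (A-B)*l)^2 / (s*(T-B)*(T-A)*(A-B))"
    unfolding d using p assms g[of "T-B" "(T-B)*u - (T-A)*w - (A-B)*l" s "(T-A)*(A-B)"] by (simp add: mult.assoc)
  define K where "K = s*A*B*T*(T-A)*(A-B)*(T-B)"
  have m1: "B*(A-B)*(T-B) \<noteq> 0" "T*(T-A)*(T-B) \<noteq> 0" "A*(T-A)*(A-B) \<noteq> 0" "A*B*T \<noteq> 0"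
    using p assms by auto
  have h1: "(T*u - A*l)^2 / (s*T*(T-A)*A) = ((T*u - A*l)^2 * (B*(A-B)*(T-B))) / K"
    by (rule cancel_help[OF m1(1)]) (unfold K_def, algebra)
  have h2: "(A*w - B*u)^2 / (s*A*(A-B)*B) = ((A*w - B*u)^2 * (T*(T-A)*(T-B))) / K"
    by (rule cancel_help[OF m1(2)]) (unfold K_def, algebra)
  have h3: "(T*w - B*l)^2 / (s*T*(T-B)*B) = ((T*w - B*l)^2 * (A*(T-A)*(A-B))) / K"
    by (rule cancel_help[OF m1(3)]) (unfold K_def, algebra)
  have h4: "((T-B)*u - (T-A)*w - (A-B)*l)^2 / (s*(T-B)*(T-A)*(A-B)) = (((T-B)*u - (T-A)*w - (A-B)*l)^2 * (A*B*T)) / K"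
    by (rule cancel_help[OF m1(4)]) (unfold K_def, algebra)
  have q: "(T*u - A*l)^2 * (B*(A-B)*(T-B)) + (A*w - B*u)^2 * (T*(T-A)*(T-B))
       = (T*w - B*l)^2 * (A*(T-A)*(A-B)) + ((T-B)*u - (T-A)*w - (A-B)*l)^2 * (A*B*T)"
    by algebra
  have "(T*u - A*l)^2 / (s*T*(T-A)*A) + (A*w - B*u)^2 / (s*A*(A-B)*B)
      = (T*w - B*l)^2 / (s*T*(T-B)*B) + ((T-B)*u - (T-A)*w - (A-B)*l)^2 / (s*(T-B)*(T-A)*(A-B))"
    unfolding h1 h2 h3 h4 add_divide_distrib[symmetric] q ..
  then show ?thesis using e1 e2 e3 e4 by simp
qed

lemma q3:
  fixes A B u w s :: real
  assumes "0 < B" "B < A" "0 < s"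
  shows "u^2/(s*A) + (w - B/A*u)^2/(s*((A-B)*B/A)) = w^2/(s*B) + (u - w)^2/(s*(A-B))"
proof -
  have p: "0 < A" "0 < A - B" using assms by auto
  have q: "u^2 * B*(A-B) + (A*w - B*u)^2 = w^2*A*(A-B) + (u-w)^2*A*B" by algebra
  have e2: "(w - B/A*u)^2/(s*((A-B)*B/A)) = (A*w - B*u)^2 / (s*A*(A-B)*B)"
    using p assms by (simp add: field_simps power2_eq_square)
  have "u^2/(s*A) + (A*w - B*u)^2 / (s*A*(A-B)*B) = (u^2 * B*(A-B) + (A*w - B*u)^2) / (s*A*B*(A-B))"
    using p assms by (simp add: field_simps)
  also have "\<dots> = (w^2*A*(A-B) + (u-w)^2*A*B) / (s*A*B*(A-B))" by (simp only: q)
  also have "\<dots> = w^2/(s*B) + (u - w)^2/(s*(A-B))"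
    using p assms by (simp add: field_simps)
  finally show ?thesis using e2 by simp
qed

abbreviation nd :: "real \<Rightarrow> real \<Rightarrow> real \<Rightarrow> real" where
  "nd m v x \<equiv> normal_density m (sqrt v) x"

lemma nd_eq: "0 < v \<Longrightarrow> nd m v x = exp (-((x - m)^2 / v) / 2) / sqrt (2 * pi * v)"
  by (simp add: normal_density_def)

lemma prod_nd:
  assumes "0 < v1" "0 < v2"
  shows "nd m1 v1 x * nd m2 v2 y = exp (-((x - m1)^2/v1 + (y - m2)^2/v2) / 2) / sqrt (4 * pi^2 * (v1 * v2))"
proof -
  have e: "exp A / sqrt P * (exp B / sqrt R) = exp (A + B) / sqrt (P * R)" for A B P R :: real
    by (simp add: exp_add real_sqrt_mult)
  have a: "-(X/2) + -(Z/2) = -(X + Z)/2" for X Z :: real by simp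
  have p: "2 * pi * v1 * (2 * pi * v2) = 4 * pi^2 * (v1 * v2)" by (simp add: power2_eq_square)
  show ?thesis
    using assms unfolding nd_eq[OF assms(1)] nd_eq[OF assms(2)] e a p by simp
qed

lemma N2:
  assumes "0 < v1" "0 < v2" "0 < w1" "0 < w2" "v1 * v2 = w1 * w2"
    and "(x - m1)^2/v1 + (y - m2)^2/v2 = (y - n1)^2/w1 + (x - n2)^2/w2"
  shows "nd m1 v1 x * nd m2 v2 y = nd n1 w1 y * nd n2 w2 x"
  unfolding prod_nd[OF assms(1,2)] prod_nd[OF assms(3,4)] assms(5,6) ..

lemma tf_m: "0 < al \<Longrightarrow> al * c \<noteq> 1 \<Longrightarrow> r \<noteq> 0 \<Longrightarrow>
  mF al c L H r = H + (1/r - c) * (L - H) / (1/al - c)"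
  unfolding mF_def by (simp add: field_simps)

lemma tf_v: "0 < al \<Longrightarrow> al * c \<noteq> 1 \<Longrightarrow> r \<noteq> 0 \<Longrightarrow>
  vF al c r = ((1/al - c) - (1/r - c)) * (1/r - c) / (1/al - c)"
  unfolding vF_def by (simp add: field_simps)

lemma bridge_facts:
  fixes al a b c :: real
  assumes "0 \<le> al" "al < a" "a < b" "0 \<le> c" "c * b < 1"
  shows "al * c < 1" "a * c < 1" "0 < a" "0 < b"
proof -
  show "0 < a" using assms by linarith
  show "0 < b" using assms by linarith
  have "c * a \<le> c * b" using assms by (intro mult_left_mono) auto
  then show "a * c < 1" using assms by (simp add: mult.commute)
  have "c * al \<le> c * b" using assms by (intro mult_left_mono) auto
  then show "al * c < 1" using assms by (simp add: mult.commute)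
qed

lemma bridge_quad:
  assumes "0 \<le> al" "al < a" "a < b" "0 \<le> c" "c * b < 1" "0 < s"
  shows "(x - mF al c L H a)^2/(s* vF al c a) + (y - mF a c x H b)^2/(s* vF a c b)
       = (y - mF al c L H b)^2/(s* vF al c b) + (x - mF al (1/b) L y a)^2/(s* vF al (1/b) a)"
proof -
  note f = bridge_facts[OF assms(1-5)]
  define A where "A = 1/a - c"
  define B where "B = 1/b - c"
  have B0: "0 < B" using assms f unfolding B_def by (simp add: field_simps mult.commute)
  have BA: "B < A" using assms f unfolding A_def B_def by (simp add: field_simps)
  have m2: "mF a c x H b = H + B * (x - H) / A" and v2: "vF a c b = (A - B) * B / A"
    using f unfolding A_def B_def by (simp_all add: tf_m tf_v)
  show ?thesis
  proof (cases "al = 0")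
    case True
    have m1: "mF al c L H a = H" "mF al c L H b = H" "mF al (1/b) L y a = y"
      and v1: "vF al c a = A" "vF al c b = B" "vF al (1/b) a = A - B"
      unfolding A_def B_def mF_def vF_def True by simp_all
    have e: "y - (H + B * (x - H) / A) = (y - H) - B/A*(x - H)" by simp
    show ?thesis unfolding m1 v1 m2 v2 e using q3[OF B0 BA assms(6), of "x - H" "y - H"]
      by (simp add: mult.commute)
  next
    case False
    then have al0: "0 < al" using assms by simp
    define T where "T = 1/al - c"
    have AT: "A < T" using assms f al0 unfolding A_def T_def by (simp add: field_simps)
    have m1: "mF al c L H a = H + A * (L - H) / T" "mF al c L H b = H + B * (L - H) / T"
      using f al0 unfolding A_def B_def T_def by (simp_all add: tf_m)
    have v1: "vF al c a = (T - A) * A / T" "vF al c b = (T - B) * B / T"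
      using f al0 unfolding A_def B_def T_def by (simp_all add: tf_v)
    have n2: "mF al (1/b) L y a = y + (A - B) * (L - y) / (T - B)"
      using f al0 assms unfolding A_def B_def T_def by (simp add: tf_m field_simps)
    have w2: "vF al (1/b) a = (T - A) * (A - B) / (T - B)"
      using f al0 assms unfolding A_def B_def T_def by (simp add: tf_v field_simps)
    have e1: "x - (H + A * (L - H) / T) = (x - H) - A * (L - H) / T" by simp
    have e2: "y - (H + B * (x - H) / A) = (y - H) - B/A*(x - H)" by simp
    have e3: "y - (H + B * (L - H) / T) = (y - H) - B * (L - H) / T" by simp
    have e4: "x - (y + (A - B) * (L - y) / (T - B)) = (x - H) - ((y - H) + (A - B)/(T - B) * ((L - H) - (y - H)))"
      by simp
    show ?thesis unfolding m1 v1 m2 v2 n2 w2 e1 e2 e3 e4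
      using q2[OF B0 BA AT assms(6), of "x - H" "L - H" "y - H"] by simp
  qed
qed


lemma vF_pos:
  fixes al r c :: real
  assumes "0 \<le> al" "al < r" "0 \<le> c" "c * r < 1"
  shows "0 < vF al c r"
proof -
  have r: "0 < r" using assms by linarith
  have "al * c \<le> r * c" using assms by (intro mult_right_mono) auto
  then have 1: "0 < 1 - al * c" using assms by (simp add: mult.commute)
  have 2: "0 < 1 - al / r" using assms r by (simp add: field_simps)
  have 3: "0 < 1 / r - c" using assms r by (simp add: field_simps mult.commute)
  show ?thesis unfolding vF_def using 1 2 3 by simp
qed

lemma bridge_vprod:
  assumes "0 \<le> al" "al < a" "a < b" "0 \<le> c" "c * b < 1"
  shows "vF al c a * vF a c b = vF al c b * vF al (1/b) a"
proof -
  note f = bridge_facts[OF assms(1-5)]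
  define A where "A = 1/a - c"
  define B where "B = 1/b - c"
  have B0: "0 < B" using assms f unfolding B_def by (simp add: field_simps mult.commute)
  have BA: "B < A" using assms f unfolding A_def B_def by (simp add: field_simps)
  have v2: "vF a c b = (A - B) * B / A"
    using f unfolding A_def B_def by (simp_all add: tf_v)
  show ?thesis
  proof (cases "al = 0")
    case True
    have v1: "vF al c a = A" "vF al c b = B" "vF al (1/b) a = A - B"
      unfolding A_def B_def vF_def True by simp_all
    show ?thesis unfolding v1 v2 using B0 BA by (simp add: field_simps)
  next
    case False
    then have al0: "0 < al" using assms by simp
    define T where "T = 1/al - c"
    have AT: "A < T" using assms f al0 unfolding A_def T_def by (simp add: field_simps)
    have v1: "vF al c a = (T - A) * A / T" "vF al c b = (T - B) * B / T"
      using f al0 unfolding A_def B_def T_def by (simp_all add: tf_v)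
    have w2: "vF al (1/b) a = (T - A) * (A - B) / (T - B)"
      using f al0 assms unfolding A_def B_def T_def by (simp add: tf_v field_simps)
    show ?thesis unfolding v1 v2 w2 using B0 BA AT by (simp add: field_simps)
  qed
qed

lemma bridge_means:
  assumes "0 \<le> al" "al < a" "a < b" "0 \<le> c" "c * b < 1"
  shows "mF al c L H a = mF al (1/b) L (mF al c L H b) a"
    and "mF a c (mF al c L H a) H b = mF al c L H b"
proof -
  note f = bridge_facts[OF assms(1-5)]
  define A where "A = 1/a - c"
  define B where "B = 1/b - c"
  have B0: "0 < B" using assms f unfolding B_def by (simp add: field_simps mult.commute)
  have BA: "B < A" using assms f unfolding A_def B_def by (simp add: field_simps)
  have m2: "mF a c x H b = H + B * (x - H) / A" for x
    using f unfolding A_def B_def by (simp_all add: tf_m)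
  have "mF al c L H a = mF al (1/b) L (mF al c L H b) a \<and> mF a c (mF al c L H a) H b = mF al c L H b"
  proof (cases "al = 0")
    case True
    have m1: "mF al c L H a = H" "mF al c L H b = H" "mF al (1/b) L y a = y" for y
      unfolding A_def B_def mF_def True by simp_all
    show ?thesis unfolding m1 m2 by simp
  next
    case False
    then have al0: "0 < al" using assms by simp
    define T where "T = 1/al - c"
    have AT: "A < T" using assms f al0 unfolding A_def T_def by (simp add: field_simps)
    have m1: "mF al c L H a = H + A * (L - H) / T" "mF al c L H b = H + B * (L - H) / T"
      using f al0 unfolding A_def B_def T_def by (simp_all add: tf_m)
    have n2: "mF al (1/b) L y a = y + (A - B) * (L - y) / (T - B)" for y
      using f al0 assms unfolding A_def B_def T_def by (simp add: tf_m field_simps)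
    show ?thesis unfolding m1 m2 n2 using B0 BA AT by (simp add: field_simps)
  qed
  then show "mF al c L H a = mF al (1/b) L (mF al c L H b) a"
    and "mF a c (mF al c L H a) H b = mF al c L H b" by auto
qed

abbreviation SP :: "real set \<Rightarrow> (real \<Rightarrow> real) measure" where
  "SP S \<equiv> PiM S (\<lambda>_. borel)"

definition stepK :: "real \<Rightarrow> real \<Rightarrow> real set \<Rightarrow> real \<Rightarrow> (real \<Rightarrow> real) \<Rightarrow> (real \<Rightarrow> real) measure" where
  "stepK D fx P r Y = distr (step_law D fx P Y r) (SP (insert r P)) (\<lambda>y. Y(r:=y))"

lemma proc_Cons: "gauss_proc_rev D fx (r # rs) = bind (gauss_proc_rev D fx rs) (stepK D fx (set rs) r)"
  by (simp add: stepK_def[abs_def])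

declare gauss_proc_rev.simps(2)[simp del]

lemma sets_gauss[simp, measurable_cong]: "sets (gauss m v) = sets borel"
  using gauss_space[of m v] by (simp add: space_prob_algebra)

lemma loP_in: "finite P \<Longrightarrow> loP P r = Some l \<Longrightarrow> l \<in> P"
  unfolding loP_def by (auto split: if_splits intro: Max_in[THEN CollectD, THEN conjunct1])
lemma hiP_in: "finite P \<Longrightarrow> hiP P r = Some l \<Longrightarrow> l \<in> P"
  unfolding hiP_def by (auto split: if_splits intro: Min_in[THEN CollectD, THEN conjunct1])

lemma YL_meas[measurable]: "finite P \<Longrightarrow> (\<lambda>Y. YL P Y r) \<in> borel_measurable (SP P)"
  unfolding YL_def by (cases "loP P r") (auto dest: loP_in)
lemma YH_meas[measurable]: "finite P \<Longrightarrow> (\<lambda>Y. YH fx P Y r) \<in> borel_measurable (SP P)"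
  unfolding YH_def by (cases "hiP P r") (auto dest: hiP_in)
lemma muS_meas[measurable]: "finite P \<Longrightarrow> (\<lambda>Y. muS fx P Y r) \<in> borel_measurable (SP P)"
  unfolding muS_def mF_def by measurable

lemma upd_meas:
  assumes f: "f \<in> M \<rightarrow>\<^sub>M SP P" and g: "g \<in> borel_measurable M"
  shows "(\<lambda>\<omega>. (f \<omega>)(r := g \<omega>)) \<in> M \<rightarrow>\<^sub>M SP (insert r P)"
proof -
  have "(\<lambda>\<omega> i. (if i = r then g \<omega> else f \<omega> i)) \<in> M \<rightarrow>\<^sub>M SP (insert r P)"
  proof (rule measurable_PiM_single')
    fix i assume "i \<in> insert r P"
    then show "(\<lambda>\<omega>. if i = r then g \<omega> else f \<omega> i) \<in> borel_measurable M"
      using f g by (cases "i = r") auto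
  next
    show "(\<lambda>\<omega> i. if i = r then g \<omega> else f \<omega> i) \<in> space M \<rightarrow> (\<Pi>\<^sub>E i\<in>insert r P. space borel)"
      using measurable_space[OF f] by (auto simp: space_PiM PiE_def extensional_def)
  qed
  then show ?thesis by (simp add: fun_upd_def[abs_def])
qed

lemma stepK_alt:
  assumes "Y \<in> space (SP P)"
  shows "stepK D fx P r Y = distr (gauss 0 (vS D P r)) (SP (insert r P)) (\<lambda>z. Y(r := muS fx P Y r + z))"
proof -
  have m: "(\<lambda>y. Y(r:=y)) \<in> borel \<rightarrow>\<^sub>M SP (insert r P)"
    using assms by (intro upd_meas) auto
  show ?thesis unfolding stepK_def step_law_eq
    by (subst gauss_shift, subst distr_distr) (auto simp: m comp_def)
qed

lemma stepK_meas:
  assumes "finite P"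
  shows "stepK D fx P r \<in> SP P \<rightarrow>\<^sub>M prob_algebra (SP (insert r P))"
proof -
  have "(\<lambda>Y. distr (gauss 0 (vS D P r)) (SP (insert r P)) (\<lambda>z. Y(r := muS fx P Y r + z))) \<in> SP P \<rightarrow>\<^sub>M prob_algebra (SP (insert r P))"
  proof (rule measurable_distr_prob_space2)
    show "(\<lambda>x. gauss 0 (vS D P r)) \<in> SP P \<rightarrow>\<^sub>M prob_algebra borel"
      using gauss_space by simp
    show "(\<lambda>(x, y). x(r := muS fx P x r + y)) \<in> SP P \<Otimes>\<^sub>M borel \<rightarrow>\<^sub>M SP (insert r P)"
    proof -
      have "(\<lambda>p. (fst p)(r := muS fx P (fst p) r + snd p)) \<in> SP P \<Otimes>\<^sub>M borel \<rightarrow>\<^sub>M SP (insert r P)"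
        using assms by (intro upd_meas) auto
      then show ?thesis by (simp add: case_prod_beta')
    qed
  qed
  then show ?thesis
    by (rule measurable_cong[THEN iffD1, rotated]) (simp add: stepK_alt)
qed

lemma proc_space: "gauss_proc_rev D fx rs \<in> space (prob_algebra (SP (set rs)))"
proof (induction rs)
  case Nil
  have "(\<lambda>_. undefined) \<in> space (SP {})" by (simp add: space_PiM)
  then show ?case by (simp add: space_prob_algebra prob_space_return)
next
  case (Cons r rs)
  have k: "stepK D fx (set rs) r \<in> SP (set rs) \<rightarrow>\<^sub>M prob_algebra (SP (set (r # rs)))"
    using stepK_meas[of "set rs"] by simp
  show ?case unfolding proc_Cons space_prob_algebra
    using prob_space_bind'[OF Cons k] sets_bind'[OF Cons k] by simp
qed

lemma sets_proc: "sets (gauss_proc_rev D fx rs) = sets (SP (set rs))"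
  using proc_space[of D fx rs] by (simp add: space_prob_algebra)

lemma space_proc: "space (gauss_proc_rev D fx rs) = space (SP (set rs))"
  using sets_proc by (rule sets_eq_imp_space_eq)

lemma prob_proc: "prob_space (gauss_proc_rev D fx rs)"
  using proc_space[of D fx rs] by (simp add: space_prob_algebra)

definition TL :: "real \<Rightarrow> real \<Rightarrow> (real \<Rightarrow> real) \<Rightarrow> real \<Rightarrow> (real \<times> real) measure" where
  "TL m1 v1 m2 v2 = bind (gauss m1 v1) (\<lambda>x. distr (gauss (m2 x) v2) (borel \<Otimes>\<^sub>M borel) (\<lambda>y. (x, y)))"

lemma TL_kernel:
  assumes [measurable]: "m2 \<in> borel_measurable borel"
  shows "(\<lambda>x. distr (gauss (m2 x) v2) (borel \<Otimes>\<^sub>M borel) (\<lambda>y. (x, y))) \<in> borel \<rightarrow>\<^sub>M prob_algebra (borel \<Otimes>\<^sub>M borel)"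
proof -
  have eq: "distr (gauss (m2 x) v2) (borel \<Otimes>\<^sub>M borel) (\<lambda>y. (x, y)) = distr (gauss 0 v2) (borel \<Otimes>\<^sub>M borel) (\<lambda>z. (x, m2 x + z))" for x
    by (subst gauss_shift) (simp add: distr_distr comp_def)
  have "(\<lambda>x. distr (gauss 0 v2) (borel \<Otimes>\<^sub>M borel) (\<lambda>z. (x, m2 x + z))) \<in> borel \<rightarrow>\<^sub>M prob_algebra (borel \<Otimes>\<^sub>M borel)"
  proof (rule measurable_distr_prob_space2)
    show "(\<lambda>x. gauss 0 v2) \<in> borel \<rightarrow>\<^sub>M prob_algebra borel" using gauss_space by simp
    show "(\<lambda>(x, y). (x, m2 x + y)) \<in> borel \<Otimes>\<^sub>M borel \<rightarrow>\<^sub>M borel \<Otimes>\<^sub>M borel" by measurable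
  qed
  then show ?thesis unfolding eq .
qed

lemma TL_space:
  assumes "m2 \<in> borel_measurable borel"
  shows "TL m1 v1 m2 v2 \<in> space (prob_algebra (borel \<Otimes>\<^sub>M borel))"
  unfolding TL_def space_prob_algebra
  using prob_space_bind'[OF gauss_space TL_kernel[OF assms]] sets_bind'[OF gauss_space TL_kernel[OF assms]]
  by simp

lemma nd_meas[measurable]:
  assumes [measurable]: "m \<in> borel_measurable M" "v \<in> borel_measurable M" "x \<in> borel_measurable M"
  shows "(\<lambda>z. nd (m z) (v z) (x z)) \<in> borel_measurable M"
  unfolding normal_density_def by measurable

lemma TL_nn:
  assumes "0 < v1" "0 < v2" and m2[measurable]: "m2 \<in> borel_measurable borel"
    and f[measurable]: "f \<in> borel_measurable (borel \<Otimes>\<^sub>M borel)"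
  shows "(\<integral>\<^sup>+z. f z \<partial>TL m1 v1 m2 v2) = (\<integral>\<^sup>+x. \<integral>\<^sup>+y. ennreal (nd m1 v1 x * nd (m2 x) v2 y) * f (x, y) \<partial>lborel \<partial>lborel)"
proof -
  have k: "(\<lambda>x. distr (gauss (m2 x) v2) (borel \<Otimes>\<^sub>M borel) (\<lambda>y. (x, y))) \<in> gauss m1 v1 \<rightarrow>\<^sub>M subprob_algebra (borel \<Otimes>\<^sub>M borel)"
    using measurable_prob_algebraD[OF TL_kernel[OF m2]] by (simp add: measurable_cong_sets[OF sets_gauss refl])
  have inner: "(\<integral>\<^sup>+z. f z \<partial>distr (gauss (m2 x) v2) (borel \<Otimes>\<^sub>M borel) (\<lambda>y. (x, y)))
      = (\<integral>\<^sup>+y. ennreal (nd (m2 x) v2 y) * f (x, y) \<partial>lborel)" for x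
  proof -
    have p: "(\<lambda>y. (x, y)) \<in> gauss (m2 x) v2 \<rightarrow>\<^sub>M borel \<Otimes>\<^sub>M borel"
      by (simp add: measurable_cong_sets[OF sets_gauss refl])
    show ?thesis
      by (simp add: nn_integral_distr[OF p] nn_integral_gauss[OF assms(2)])
  qed
  have j: "(\<lambda>(x, y). ennreal (nd (m2 x) v2 y) * f (x, y)) \<in> borel_measurable (borel \<Otimes>\<^sub>M lborel)"
  proof -
    have "(\<lambda>(x, y). ennreal (nd (m2 x) v2 y) * f (x, y)) \<in> borel_measurable (borel \<Otimes>\<^sub>M borel)"
      by measurable
    then show ?thesis
      by (simp add: measurable_cong_sets[OF sets_pair_measure_cong[OF refl sets_lborel] refl])
  qed
  have G: "(\<lambda>x. \<integral>\<^sup>+y. ennreal (nd (m2 x) v2 y) * f (x, y) \<partial>lborel) \<in> borel_measurable borel"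
    using lborel.borel_measurable_nn_integral[OF j] by simp
  have "(\<integral>\<^sup>+z. f z \<partial>TL m1 v1 m2 v2) = (\<integral>\<^sup>+x. \<integral>\<^sup>+z. f z \<partial>distr (gauss (m2 x) v2) (borel \<Otimes>\<^sub>M borel) (\<lambda>y. (x, y)) \<partial>gauss m1 v1)"
    unfolding TL_def by (rule nn_integral_bind[OF f k])
  also have "\<dots> = (\<integral>\<^sup>+x. \<integral>\<^sup>+y. ennreal (nd (m2 x) v2 y) * f (x, y) \<partial>lborel \<partial>gauss m1 v1)"
    by (simp add: inner)
  also have "\<dots> = (\<integral>\<^sup>+x. ennreal (nd m1 v1 x) * (\<integral>\<^sup>+y. ennreal (nd (m2 x) v2 y) * f (x, y) \<partial>lborel) \<partial>lborel)"
    by (rule nn_integral_gauss[OF assms(1) G])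
  also have "\<dots> = (\<integral>\<^sup>+x. \<integral>\<^sup>+y. ennreal (nd m1 v1 x * nd (m2 x) v2 y) * f (x, y) \<partial>lborel \<partial>lborel)"
    by (intro nn_integral_cong) (simp add: nn_integral_cmult[symmetric] ennreal_mult mult.assoc)
  finally show ?thesis .
qed

lemma TL_swap:
  assumes m2[measurable]: "m2 \<in> borel_measurable borel" and n2[measurable]: "n2 \<in> borel_measurable borel"
    and H: "(v1 = 0 \<and> v2 = 0 \<and> w1 = 0 \<and> w2 = 0 \<and> m1 = n2 n1 \<and> m2 m1 = n1) \<or>
            (0 < v1 \<and> 0 < v2 \<and> 0 < w1 \<and> 0 < w2 \<and> (\<forall>x y. nd m1 v1 x * nd (m2 x) v2 y = nd n1 w1 y * nd (n2 y) w2 x))"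
  shows "TL m1 v1 m2 v2 = distr (TL n1 w1 n2 w2) (borel \<Otimes>\<^sub>M borel) (\<lambda>(y, x). (x, y))"
  using H
proof
  assume h: "v1 = 0 \<and> v2 = 0 \<and> w1 = 0 \<and> w2 = 0 \<and> m1 = n2 n1 \<and> m2 m1 = n1"
  have g0: "gauss m 0 = return borel m" for m by (simp add: gauss_def)
  have TL0: "TL m 0 k 0 = return (borel \<Otimes>\<^sub>M borel) (m, k m)" if [measurable]: "k \<in> borel_measurable borel" for m k
  proof -
    have "TL m 0 k 0 = distr (gauss (k m) 0) (borel \<Otimes>\<^sub>M borel) (\<lambda>y. (m, y))"
      unfolding TL_def g0[of m]
      by (rule bind_return[OF measurable_prob_algebraD[OF TL_kernel[OF that]]]) simp
    also have "\<dots> = return (borel \<Otimes>\<^sub>M borel) (m, k m)"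
      unfolding g0 by (subst distr_return) simp_all
    finally show ?thesis .
  qed
  have sw: "(\<lambda>(y, x). (x, y)) \<in> (borel \<Otimes>\<^sub>M borel :: (real \<times> real) measure) \<rightarrow>\<^sub>M borel \<Otimes>\<^sub>M borel"
    by measurable
  have e1: "m1 = n2 n1" and e2: "m2 m1 = n1" using h by auto
  have "TL m1 v1 m2 v2 = return (borel \<Otimes>\<^sub>M borel) (m1, m2 m1)" using h by (simp add: TL0)
  also have "\<dots> = return (borel \<Otimes>\<^sub>M borel) (n2 n1, n1)"
    by (subst e2, subst e1) (rule refl)
  also have "\<dots> = distr (TL n1 w1 n2 w2) (borel \<Otimes>\<^sub>M borel) (\<lambda>(y, x). (x, y))"
    using h by (simp add: TL0 distr_return[OF sw] space_pair_measure)
  finally show ?thesis .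
next
  assume h: "0 < v1 \<and> 0 < v2 \<and> 0 < w1 \<and> 0 < w2 \<and> (\<forall>x y. nd m1 v1 x * nd (m2 x) v2 y = nd n1 w1 y * nd (n2 y) w2 x)"
  have s1: "sets (TL m1 v1 m2 v2) = sets (borel \<Otimes>\<^sub>M borel)"
    using TL_space[OF m2] by (simp add: space_prob_algebra)
  have s2: "sets (TL n1 w1 n2 w2) = sets (borel \<Otimes>\<^sub>M borel)"
    using TL_space[OF n2] by (simp add: space_prob_algebra)
  show ?thesis
  proof (rule measure_eqI)
    show "sets (TL m1 v1 m2 v2) = sets (distr (TL n1 w1 n2 w2) (borel \<Otimes>\<^sub>M borel) (\<lambda>(y, x). (x, y)))"
      by (simp add: s1)
  next
    fix A assume "A \<in> sets (TL m1 v1 m2 v2)"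
    then have A[measurable]: "A \<in> sets (borel \<Otimes>\<^sub>M borel)" by (simp add: s1)
    have sw: "(\<lambda>(y, x). (x, y)) \<in> TL n1 w1 n2 w2 \<rightarrow>\<^sub>M borel \<Otimes>\<^sub>M borel"
      by (simp add: measurable_cong_sets[OF s2 refl])
    have "emeasure (TL m1 v1 m2 v2) A = (\<integral>\<^sup>+z. indicator A z \<partial>TL m1 v1 m2 v2)"
      using A s1 by simp
    also have "\<dots> = (\<integral>\<^sup>+x. \<integral>\<^sup>+y. ennreal (nd m1 v1 x * nd (m2 x) v2 y) * indicator A (x, y) \<partial>lborel \<partial>lborel)"
      using h by (intro TL_nn) auto
    also have "\<dots> = (\<integral>\<^sup>+x. \<integral>\<^sup>+y. ennreal (nd n1 w1 y * nd (n2 y) w2 x) * indicator A (x, y) \<partial>lborel \<partial>lborel)"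
      using h by simp
    also have "\<dots> = (\<integral>\<^sup>+y. \<integral>\<^sup>+x. ennreal (nd n1 w1 y * nd (n2 y) w2 x) * indicator A (x, y) \<partial>lborel \<partial>lborel)"
    proof (rule lborel_pair.Fubini'[symmetric])
      have "(\<lambda>(x, y). ennreal (nd n1 w1 y * nd (n2 y) w2 x) * indicator A (x, y)) \<in> borel_measurable (borel \<Otimes>\<^sub>M borel)"
        by measurable
      then show "(\<lambda>(x, y). ennreal (nd n1 w1 y * nd (n2 y) w2 x) * indicator A (x, y)) \<in> borel_measurable (lborel \<Otimes>\<^sub>M lborel)"
        by (simp add: measurable_cong_sets[OF sets_pair_measure_cong[OF sets_lborel sets_lborel] refl])
    qed
    also have "\<dots> = (\<integral>\<^sup>+z. indicator A (case z of (y, x) \<Rightarrow> (x, y)) \<partial>TL n1 w1 n2 w2)"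
      using h by (subst TL_nn) (auto simp: split_beta')
    also have "\<dots> = (\<integral>\<^sup>+z. indicator A z \<partial>distr (TL n1 w1 n2 w2) (borel \<Otimes>\<^sub>M borel) (\<lambda>(y, x). (x, y)))"
      by (rule nn_integral_distr[OF sw, symmetric]) simp
    also have "\<dots> = emeasure (distr (TL n1 w1 n2 w2) (borel \<Otimes>\<^sub>M borel) (\<lambda>(y, x). (x, y))) A"
      using A by simp
    finally show "emeasure (TL m1 v1 m2 v2) A = emeasure (distr (TL n1 w1 n2 w2) (borel \<Otimes>\<^sub>M borel) (\<lambda>(y, x). (x, y))) A" .
  qed
qed

lemma upd2_meas:
  assumes "Y \<in> space (SP P)"
  shows "(\<lambda>(x, y). Y(a := x, b := y)) \<in> borel \<Otimes>\<^sub>M borel \<rightarrow>\<^sub>M SP (insert b (insert a P))"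
proof -
  have "(\<lambda>_. Y) \<in> (borel \<Otimes>\<^sub>M borel :: (real \<times> real) measure) \<rightarrow>\<^sub>M SP P"
    using assms by simp
  from upd_meas[OF this, of fst a] have "(\<lambda>p. Y(a := fst p)) \<in> (borel \<Otimes>\<^sub>M borel :: (real \<times> real) measure) \<rightarrow>\<^sub>M SP (insert a P)"
    by simp
  from upd_meas[OF this, of snd b] show ?thesis by (simp add: case_prod_beta')
qed

lemma upd1_meas:
  assumes "Y \<in> space (SP P)"
  shows "(\<lambda>x. Y(a := x)) \<in> borel \<rightarrow>\<^sub>M SP (insert a P)"
proof -
  have "(\<lambda>_. Y) \<in> (borel :: real measure) \<rightarrow>\<^sub>M SP P"
    using assms by simp
  from upd_meas[OF this, of "\<lambda>x. x" a] show ?thesis by simp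
qed

lemma two_step:
  assumes fin: "finite P" and Y: "Y \<in> space (SP P)"
  shows "bind (stepK D fx P a Y) (stepK D fx (insert a P) b)
    = distr (TL (muS fx P Y a) (vS D P a) (\<lambda>x. muS fx (insert a P) (Y(a:=x)) b) (vS D (insert a P) b))
        (SP (insert b (insert a P))) (\<lambda>(x, y). Y(a := x, b := y))"
proof -
  let ?m1 = "muS fx P Y a" and ?v1 = "vS D P a"
  let ?m2 = "\<lambda>x. muS fx (insert a P) (Y(a:=x)) b" and ?v2 = "vS D (insert a P) b"
  let ?h = "\<lambda>(x, y). Y(a := x, b := y)"
  have m2: "?m2 \<in> borel_measurable borel"
    by (rule measurable_compose[OF upd1_meas[OF Y] muS_meas]) (simp add: fin)
  have h: "?h \<in> borel \<Otimes>\<^sub>M borel \<rightarrow>\<^sub>M SP (insert b (insert a P))" by (rule upd2_meas[OF Y])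
  have ne: "space (gauss ?m1 ?v1) \<noteq> {}"
    using gauss_space[of ?m1 ?v1] by (simp add: space_prob_algebra prob_space.not_empty)
  have k1: "stepK D fx (insert a P) b \<in> SP (insert a P) \<rightarrow>\<^sub>M subprob_algebra (SP (insert b (insert a P)))"
    by (rule measurable_prob_algebraD[OF stepK_meas]) (simp add: fin)
  have f1: "(\<lambda>x. Y(a := x)) \<in> gauss ?m1 ?v1 \<rightarrow>\<^sub>M SP (insert a P)"
    using upd1_meas[OF Y] by (simp add: measurable_cong_sets[OF sets_gauss refl])
  have kT: "(\<lambda>x. distr (gauss (?m2 x) ?v2) (borel \<Otimes>\<^sub>M borel) (\<lambda>y. (x, y))) \<in> gauss ?m1 ?v1 \<rightarrow>\<^sub>M subprob_algebra (borel \<Otimes>\<^sub>M borel)"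
    using measurable_prob_algebraD[OF TL_kernel[OF m2]] by (simp add: measurable_cong_sets[OF sets_gauss refl])
  have "bind (stepK D fx P a Y) (stepK D fx (insert a P) b)
      = bind (distr (gauss ?m1 ?v1) (SP (insert a P)) (\<lambda>x. Y(a := x))) (stepK D fx (insert a P) b)"
    by (simp add: stepK_def step_law_eq)
  also have "\<dots> = bind (gauss ?m1 ?v1) (\<lambda>x. stepK D fx (insert a P) b (Y(a := x)))"
    by (rule bind_distr[OF f1 k1 ne])
  also have "\<dots> = bind (gauss ?m1 ?v1) (\<lambda>x. distr (distr (gauss (?m2 x) ?v2) (borel \<Otimes>\<^sub>M borel) (\<lambda>y. (x, y))) (SP (insert b (insert a P))) ?h)"
  proof (intro bind_cong refl)
    fix x
    have p: "(\<lambda>y. (x, y)) \<in> gauss (?m2 x) ?v2 \<rightarrow>\<^sub>M borel \<Otimes>\<^sub>M borel"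
      by (simp add: measurable_cong_sets[OF sets_gauss refl])
    show "stepK D fx (insert a P) b (Y(a := x)) = distr (distr (gauss (?m2 x) ?v2) (borel \<Otimes>\<^sub>M borel) (\<lambda>y. (x, y))) (SP (insert b (insert a P))) ?h"
      by (simp add: distr_distr[OF h p] comp_def stepK_def step_law_eq)
  qed
  also have "\<dots> = distr (TL ?m1 ?v1 ?m2 ?v2) (SP (insert b (insert a P))) ?h"
    unfolding TL_def by (rule distr_bind[OF kT ne h, symmetric])
  finally show ?thesis .
qed

lemma loP_eqI: "{x\<in>P. x \<le> r} = {x\<in>Q. x \<le> s} \<Longrightarrow> loP P r = loP Q s"
proof -
  assume e: "{x\<in>P. x \<le> r} = {x\<in>Q. x \<le> s}"
  then have "(\<exists>x\<in>P. x \<le> r) = (\<exists>x\<in>Q. x \<le> s)" by blast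
  with e show ?thesis unfolding loP_def by simp
qed

lemma hiP_eqI: "{x\<in>P. r < x} = {x\<in>Q. s < x} \<Longrightarrow> hiP P r = hiP Q s"
proof -
  assume e: "{x\<in>P. r < x} = {x\<in>Q. s < x}"
  then have "(\<exists>x\<in>P. r < x) = (\<exists>x\<in>Q. s < x)" by blast
  with e show ?thesis unfolding hiP_def by simp
qed

lemma loP_someI: "finite P \<Longrightarrow> l \<in> P \<Longrightarrow> l \<le> r \<Longrightarrow> (\<forall>x\<in>P. x \<le> r \<longrightarrow> x \<le> l) \<Longrightarrow> loP P r = Some l"
  unfolding loP_def by (auto intro!: Max_eqI)

lemma hiP_someI: "finite P \<Longrightarrow> h \<in> P \<Longrightarrow> r < h \<Longrightarrow> (\<forall>x\<in>P. r < x \<longrightarrow> h \<le> x) \<Longrightarrow> hiP P r = Some h"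
  unfolding hiP_def by (auto intro!: Min_eqI)

lemma loP_SomeD:
  assumes "finite P" "loP P r = Some l"
  shows "l \<in> P \<and> l \<le> r \<and> (\<forall>x\<in>P. x \<le> r \<longrightarrow> x \<le> l)"
proof -
  let ?S = "{x\<in>P. x \<le> r}"
  have ne: "\<exists>x\<in>P. x \<le> r" and l: "l = Max ?S"
    using assms(2) unfolding loP_def by (auto split: if_splits)
  have fin: "finite ?S" using assms(1) by simp
  have "?S \<noteq> {}" using ne by blast
  then have "l \<in> ?S" unfolding l using fin by (rule Max_in[rotated])
  moreover have "\<forall>x\<in>P. x \<le> r \<longrightarrow> x \<le> l" unfolding l using fin by (auto intro: Max_ge)
  ultimately show ?thesis by blast
qed

lemma hiP_SomeD:
  assumes "finite P" "hiP P r = Some h"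
  shows "h \<in> P \<and> r < h \<and> (\<forall>x\<in>P. r < x \<longrightarrow> h \<le> x)"
proof -
  let ?S = "{x\<in>P. r < x}"
  have ne: "\<exists>x\<in>P. r < x" and h: "h = Min ?S"
    using assms(2) unfolding hiP_def by (auto split: if_splits)
  have fin: "finite ?S" using assms(1) by simp
  have "?S \<noteq> {}" using ne by blast
  then have "h \<in> ?S" unfolding h using fin by (rule Min_in[rotated])
  moreover have "\<forall>x\<in>P. r < x \<longrightarrow> h \<le> x" unfolding h using fin by (auto intro: Min_le)
  ultimately show ?thesis by blast
qed

lemma loP_NoneD: "loP P r = None \<Longrightarrow> \<forall>x\<in>P. r < x"
  unfolding loP_def by (auto split: if_splits)

lemma hiP_NoneD: "hiP P r = None \<Longrightarrow> \<forall>x\<in>P. x \<le> r"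
  unfolding hiP_def by (auto split: if_splits)

lemma vS_pos:
  assumes "finite P" "\<forall>x\<in>P. 0 < x" "r \<notin> P" "0 < r" "D \<noteq> 0"
  shows "0 < vS D P r"
proof -
  have al: "0 \<le> alP P r \<and> alP P r < r"
  proof (cases "loP P r")
    case None then show ?thesis using assms by (simp add: alP_def)
  next
    case (Some l)
    then have "l \<in> P" "l \<le> r" using loP_SomeD[OF assms(1)] by auto
    then have "0 < l" "l < r" using assms by (auto simp: order.order_iff_strict)
    then show ?thesis using Some by (simp add: alP_def)
  qed
  have c: "0 \<le> cP P r \<and> cP P r * r < 1"
  proof (cases "hiP P r")
    case None then show ?thesis by (simp add: cP_def)
  next
    case (Some h)
    then have "h \<in> P" "r < h" using hiP_SomeD[OF assms(1)] by auto
    then have "0 < h" using assms by auto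
    then show ?thesis using Some \<open>r < h\<close> by (simp add: cP_def field_simps)
  qed
  have "0 < vF (alP P r) (cP P r) r" using al c by (intro vF_pos) auto
  then show ?thesis unfolding vS_def using assms by simp
qed

lemma muS_vS_indep:
  assumes fin: "finite P" and lo: "loP Q r = loP P r" and hi: "hiP Q r = hiP P r"
    and "\<And>l. loP P r = Some l \<Longrightarrow> Y' l = Y l" and "\<And>h. hiP P r = Some h \<Longrightarrow> Y' h = Y h"
  shows "muS fx Q Y' r = muS fx P Y r" "vS D Q r = vS D P r"
  using assms unfolding muS_def vS_def alP_def cP_def YL_def YH_def
  by (cases "loP P r"; cases "hiP P r"; simp)+

lemma swap_lt:
  assumes fin: "finite P" and pos: "\<forall>x\<in>P. 0 < x" and a0: "0 < a" and ab: "a < b"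
    and aP: "a \<notin> P" and bP: "b \<notin> P" and Y: "Y \<in> space (SP P)"
  shows "bind (stepK D fx P b Y) (stepK D fx (insert b P) a) = bind (stepK D fx P a Y) (stepK D fx (insert a P) b)"
proof -
  define m1 where "m1 = muS fx P Y a"
  define v1 where "v1 = vS D P a"
  define m2 where "m2 = (\<lambda>x. muS fx (insert a P) (Y(a:=x)) b)"
  define v2 where "v2 = vS D (insert a P) b"
  define n1 where "n1 = muS fx P Y b"
  define w1 where "w1 = vS D P b"
  define n2 where "n2 = (\<lambda>y. muS fx (insert b P) (Y(b:=y)) a)"
  define w2 where "w2 = vS D (insert b P) a"
  have b0: "0 < b" using a0 ab by simp
  have finA: "finite (insert a P)" and finB: "finite (insert b P)" using fin by auto
  have posA: "\<forall>x\<in>insert a P. 0 < x" and posB: "\<forall>x\<in>insert b P. 0 < x" using pos a0 b0 by auto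
  have aB: "a \<notin> insert b P" and bA: "b \<notin> insert a P" using aP bP ab by auto
  have m2m: "m2 \<in> borel_measurable borel" unfolding m2_def
    by (rule measurable_compose[OF upd1_meas[OF Y] muS_meas[OF finA]])
  have n2m: "n2 \<in> borel_measurable borel" unfolding n2_def
    by (rule measurable_compose[OF upd1_meas[OF Y] muS_meas[OF finB]])
  have zero: "D = 0 \<Longrightarrow> v1 = 0 \<and> v2 = 0 \<and> w1 = 0 \<and> w2 = 0"
    unfolding v1_def v2_def w1_def w2_def vS_def by simp
  have posv: "D \<noteq> 0 \<Longrightarrow> 0 < v1 \<and> 0 < v2 \<and> 0 < w1 \<and> 0 < w2"
    unfolding v1_def v2_def w1_def w2_def
    using vS_pos[OF fin pos aP a0] vS_pos[OF fin pos bP b0] vS_pos[OF finA posA bA b0] vS_pos[OF finB posB aB a0]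
    by auto
  have Hyp: "(v1 = 0 \<and> v2 = 0 \<and> w1 = 0 \<and> w2 = 0 \<and> m1 = n2 n1 \<and> m2 m1 = n1) \<or>
            (0 < v1 \<and> 0 < v2 \<and> 0 < w1 \<and> 0 < w2 \<and> (\<forall>x y. nd m1 v1 x * nd (m2 x) v2 y = nd n1 w1 y * nd (n2 y) w2 x))"
  proof (cases "\<exists>p\<in>P. a < p \<and> p < b")
    case True
    then obtain p where p: "p \<in> P" "a < p" "p < b" by blast
    have "loP P b \<noteq> None" using p loP_NoneD[of P b] by force
    then obtain l where l: "loP P b = Some l" by auto
    have lD: "l \<in> P \<and> l \<le> b \<and> (\<forall>x\<in>P. x \<le> b \<longrightarrow> x \<le> l)" by (rule loP_SomeD[OF fin l])
    have E1: "loP (insert a P) b = loP P b"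
      unfolding l using lD p ab by (intro loP_someI[OF finA]) force+
    have E2: "hiP (insert a P) b = hiP P b"
      using ab by (intro hiP_eqI) auto
    have "hiP P a \<noteq> None" using p hiP_NoneD[of P a] by force
    then obtain h where h: "hiP P a = Some h" by auto
    have hD: "h \<in> P \<and> a < h \<and> (\<forall>x\<in>P. a < x \<longrightarrow> h \<le> x)" by (rule hiP_SomeD[OF fin h])
    have E3: "loP (insert b P) a = loP P a"
      using ab by (intro loP_eqI) auto
    have E4: "hiP (insert b P) a = hiP P a"
      unfolding h using hD p ab by (intro hiP_someI[OF finB]) force+
    have neqa: "\<And>q. q \<in> P \<Longrightarrow> q \<noteq> a" and neqb: "\<And>q. q \<in> P \<Longrightarrow> q \<noteq> b" using aP bP by auto
    have M2: "m2 x = n1" and V2: "v2 = w1" for x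
      unfolding m2_def n1_def v2_def w1_def
      by (rule muS_vS_indep[OF fin E1 E2];
          auto dest!: loP_SomeD[OF fin] hiP_SomeD[OF fin] dest: neqa)+
    have N2: "n2 y = m1" and W2: "w2 = v1" for y
      unfolding n2_def m1_def w2_def v1_def
      by (rule muS_vS_indep[OF fin E3 E4];
          auto dest!: loP_SomeD[OF fin] hiP_SomeD[OF fin] dest: neqb)+
    show ?thesis
    proof (cases "D = 0")
      case True then show ?thesis using zero M2 N2 by simp
    next
      case False then show ?thesis using posv M2 N2 V2 W2 by (simp add: mult.commute)
    qed
  next
    case False
    then have nb: "\<And>x. x \<in> P \<Longrightarrow> x \<le> a \<or> b \<le> x" by force
    have nb': "\<And>x. x \<in> P \<Longrightarrow> x < a \<or> b < x" using nb aP bP by (metis order.not_eq_order_implies_strict)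
    have E1: "loP P b = loP P a" using nb' ab by (intro loP_eqI) force
    have E2: "hiP P b = hiP P a" using nb' ab by (intro hiP_eqI) force
    have E3: "loP (insert a P) b = Some a"
      using nb' ab by (intro loP_someI[OF finA]) force+
    have E4: "hiP (insert a P) b = hiP P a"
      using nb' ab by (intro hiP_eqI) force
    have E5: "loP (insert b P) a = loP P a"
      using nb' ab by (intro loP_eqI) force
    have E6: "hiP (insert b P) a = Some b"
      using nb' ab by (intro hiP_someI[OF finB]) force+
    define al where "al = alP P a"
    define c where "c = cP P a"
    define L where "L = YL P Y a"
    define H where "H = YH fx P Y a"
    define s where "s = D\<^sup>2 / 2"
    have neqa: "\<And>q. q \<in> P \<Longrightarrow> q \<noteq> a" and neqb: "\<And>q. q \<in> P \<Longrightarrow> q \<noteq> b" using aP bP by auto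
    have F1: "m1 = mF al c L H a" "v1 = s * vF al c a"
      unfolding m1_def v1_def muS_def vS_def al_def c_def L_def H_def s_def by simp_all
    have F2: "n1 = mF al c L H b" "w1 = s * vF al c b"
      unfolding n1_def w1_def muS_def vS_def al_def c_def L_def H_def s_def alP_def cP_def YL_def YH_def E1 E2
      by simp_all
    have F3: "m2 x = mF a c x H b" for x
    proof -
      have "YH fx (insert a P) (Y(a := x)) b = H"
        unfolding YH_def H_def E4 by (cases "hiP P a") (auto dest!: hiP_SomeD[OF fin] dest: neqa)
      then show ?thesis
        unfolding m2_def muS_def c_def by (simp add: alP_def cP_def YL_def E3 E4)
    qed
    have F3': "v2 = s * vF a c b"
      unfolding v2_def vS_def s_def c_def by (simp add: alP_def cP_def E3 E4)
    have F4: "n2 y = mF al (1/b) L y a" for y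
    proof -
      have "YL (insert b P) (Y(b := y)) a = L"
        unfolding YL_def L_def E5 by (cases "loP P a") (auto dest!: loP_SomeD[OF fin] dest: neqb)
      then show ?thesis
        unfolding n2_def muS_def al_def by (simp add: alP_def cP_def YH_def E5 E6)
    qed
    have F4': "w2 = s * vF al (1/b) a"
      unfolding w2_def vS_def s_def al_def by (simp add: alP_def cP_def E5 E6)
    have al0: "0 \<le> al" and ala: "al < a"
    proof -
      have "0 \<le> al \<and> al < a"
      proof (cases "loP P a")
        case None then show ?thesis using a0 by (simp add: al_def alP_def)
      next
        case (Some l)
        then have "l \<in> P" "l \<le> a" using loP_SomeD[OF fin] by auto
        then have "0 < l" "l < a" using pos aP by (auto simp: order.order_iff_strict)
        then show ?thesis using Some by (simp add: al_def alP_def)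
      qed
      then show "0 \<le> al" "al < a" by auto
    qed
    have c0: "0 \<le> c" and cb: "c * b < 1"
    proof -
      have "0 \<le> c \<and> c * b < 1"
      proof (cases "hiP P a")
        case None then show ?thesis by (simp add: c_def cP_def)
      next
        case (Some h)
        then have "h \<in> P" "a < h" using hiP_SomeD[OF fin] by auto
        then have "b < h" using nb' by force
        then have "0 < h" using b0 by simp
        then show ?thesis using Some \<open>b < h\<close> by (simp add: c_def cP_def field_simps)
      qed
      then show "0 \<le> c" "c * b < 1" by auto
    qed
    note BA = al0 ala ab c0 cb
    show ?thesis
    proof (cases "D = 0")
      case True
      then show ?thesis using zero bridge_means[OF BA, of L H]
        by (simp add: F1 F2 F3 F4)
    next
      case False
      then have s0: "0 < s" unfolding s_def by simp
      have vp: "v1 * v2 = w1 * w2"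
        unfolding F1 F2 F3' F4' using bridge_vprod[OF BA] by (simp add: algebra_simps)
      have "nd m1 v1 x * nd (m2 x) v2 y = nd n1 w1 y * nd (n2 y) w2 x" for x y
        using posv[OF False] vp
        by (intro N2) (auto simp: F1 F2 F3 F3' F4 F4' bridge_quad[OF BA s0])
      then show ?thesis using posv[OF False] by simp
    qed
  qed
  have TLeq: "TL m1 v1 m2 v2 = distr (TL n1 w1 n2 w2) (borel \<Otimes>\<^sub>M borel) (\<lambda>(y, x). (x, y))"
    by (rule TL_swap[OF m2m n2m Hyp])
  have s2: "sets (TL n1 w1 n2 w2) = sets (borel \<Otimes>\<^sub>M borel)"
    using TL_space[OF n2m] by (simp add: space_prob_algebra)
  have sw: "(\<lambda>(y, x). (x, y)) \<in> TL n1 w1 n2 w2 \<rightarrow>\<^sub>M borel \<Otimes>\<^sub>M borel"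
    by (simp add: measurable_cong_sets[OF s2 refl])
  have funeq: "(\<lambda>(x, y). Y(a := x, b := y)) \<circ> (\<lambda>(y, x). (x, y)) = (\<lambda>(x, y). Y(b := x, a := y))"
    using ab by (auto simp: fun_eq_iff fun_upd_twist)
  have "bind (stepK D fx P a Y) (stepK D fx (insert a P) b)
      = distr (TL m1 v1 m2 v2) (SP (insert b (insert a P))) (\<lambda>(x, y). Y(a := x, b := y))"
    unfolding m1_def v1_def m2_def v2_def by (rule two_step[OF fin Y])
  also have "\<dots> = distr (TL n1 w1 n2 w2) (SP (insert b (insert a P))) (\<lambda>(x, y). Y(b := x, a := y))"
    unfolding TLeq by (subst distr_distr[OF upd2_meas[OF Y] sw]) (simp add: funeq)
  also have "\<dots> = bind (stepK D fx P b Y) (stepK D fx (insert b P) a)"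
    unfolding n1_def w1_def n2_def w2_def by (subst two_step[OF fin Y]) (simp add: insert_commute)
  finally show ?thesis ..
qed

lemma swap_pt:
  assumes "finite P" "\<forall>x\<in>P. 0 < x" "0 < a" "0 < b" "a \<noteq> b" "a \<notin> P" "b \<notin> P" "Y \<in> space (SP P)"
  shows "bind (stepK D fx P b Y) (stepK D fx (insert b P) a) = bind (stepK D fx P a Y) (stepK D fx (insert a P) b)"
proof (cases "a < b")
  case True then show ?thesis using assms by (intro swap_lt) auto
next
  case False
  then have "b < a" using assms by auto
  then show ?thesis using assms swap_lt[of P b a Y D fx] by auto
qed

lemma swap_proc:
  assumes "distinct (a # b # rs)" "\<forall>x\<in>set (a # b # rs). 0 < x"
  shows "gauss_proc_rev D fx (a # b # rs) = gauss_proc_rev D fx (b # a # rs)"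
proof -
  have k: "\<And>P r. finite P \<Longrightarrow> stepK D fx P r \<in> SP P \<rightarrow>\<^sub>M subprob_algebra (SP (insert r P))"
    by (rule measurable_prob_algebraD, rule stepK_meas)
  have sp: "space (gauss_proc_rev D fx rs) = space (SP (set rs))"
    by (rule space_proc)
  have k0: "stepK D fx (set rs) r \<in> gauss_proc_rev D fx rs \<rightarrow>\<^sub>M subprob_algebra (SP (insert r (set rs)))" for r
    by (subst measurable_cong_sets[OF sets_proc refl]) (auto intro: k)
  have "gauss_proc_rev D fx (a # b # rs) = bind (gauss_proc_rev D fx rs) (\<lambda>Y. bind (stepK D fx (set rs) b Y) (stepK D fx (insert b (set rs)) a))"
    unfolding proc_Cons set_simps by (rule bind_assoc) (auto intro: k k0)
  also have "\<dots> = bind (gauss_proc_rev D fx rs) (\<lambda>Y. bind (stepK D fx (set rs) a Y) (stepK D fx (insert a (set rs)) b))"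
    using assms by (intro bind_cong refl swap_pt) (auto simp: sp)
  also have "\<dots> = gauss_proc_rev D fx (b # a # rs)"
    unfolding proc_Cons set_simps by (rule bind_assoc[symmetric]) (auto intro: k k0)
  finally show ?thesis .
qed

lemma proc_cong: "set xs = set ys \<Longrightarrow> gauss_proc_rev D fx xs = gauss_proc_rev D fx ys \<Longrightarrow>
   gauss_proc_rev D fx (r # xs) = gauss_proc_rev D fx (r # ys)"
  by (simp add: proc_Cons)

lemma proc_move:
  "distinct (x # ys @ zs) \<Longrightarrow> \<forall>r\<in>set (x # ys @ zs). 0 < r \<Longrightarrow>
   gauss_proc_rev D fx (x # ys @ zs) = gauss_proc_rev D fx (ys @ x # zs)"
proof (induction ys)
  case Nil then show ?case by simp
next
  case (Cons y ys)
  have "gauss_proc_rev D fx (x # (y # ys) @ zs) = gauss_proc_rev D fx (y # x # ys @ zs)"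
    using Cons.prems swap_proc[of x y "ys @ zs" D fx] by simp
  also have "\<dots> = gauss_proc_rev D fx (y # ys @ x # zs)"
    using Cons by (intro proc_cong) auto
  finally show ?case by simp
qed

lemma proc_perm:
  "distinct xs \<Longrightarrow> distinct ys \<Longrightarrow> set xs = set ys \<Longrightarrow> \<forall>r\<in>set xs. 0 < r \<Longrightarrow>
   gauss_proc_rev D fx xs = gauss_proc_rev D fx ys"
proof (induction xs arbitrary: ys)
  case Nil then show ?case by simp
next
  case (Cons x xs)
  then have "x \<in> set ys" by auto
  then obtain ys1 ys2 where ys: "ys = ys1 @ x # ys2" by (meson split_list)
  have "gauss_proc_rev D fx (x # xs) = gauss_proc_rev D fx (x # ys1 @ ys2)"
    using Cons.prems ys by (intro proc_cong Cons.IH) auto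
  also have "\<dots> = gauss_proc_rev D fx ys"
    unfolding ys using Cons.prems ys by (intro proc_move) auto
  finally show ?case .
qed

lemma step_law_empty: "step_law D fx {} Y r = gauss fx (D\<^sup>2 / (2 * r))"
  by (simp add: step_law_def) (simp add: mult.commute)

lemma proc_single:
  "gauss_proc_rev D fx [r] = distr (gauss fx (D\<^sup>2 / (2 * r))) (SP {r}) (\<lambda>y. (\<lambda>_. undefined)(r := y))"
proof -
  have "gauss_proc_rev D fx [r] = bind (return (SP {}) (\<lambda>_. undefined)) (stepK D fx {} r)"
    using proc_Cons[of D fx r "[]"] by simp
  also have "\<dots> = stepK D fx {} r (\<lambda>_. undefined)"
    by (rule bind_return[OF measurable_prob_algebraD[OF stepK_meas]]) (simp_all add: space_PiM)
  finally show ?thesis by (simp add: stepK_def step_law_empty)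
qed

lemma marg_keep:
  assumes "rho \<in> set rs" "rho \<notin> set zs"
  shows "distr (gauss_proc_rev D fx (zs @ rs)) borel (\<lambda>Y. Y rho) = distr (gauss_proc_rev D fx rs) borel (\<lambda>Y. Y rho)"
  using assms(2)
proof (induction zs)
  case Nil then show ?case by simp
next
  case (Cons z zs)
  let ?M = "gauss_proc_rev D fx (zs @ rs)"
  let ?P = "set (zs @ rs)"
  have k: "stepK D fx ?P z \<in> ?M \<rightarrow>\<^sub>M subprob_algebra (SP (insert z ?P))"
    by (subst measurable_cong_sets[OF sets_proc refl]) (auto intro: measurable_prob_algebraD stepK_meas)
  have "rho \<in> ?P" using assms by simp
  have "distr (gauss_proc_rev D fx ((z # zs) @ rs)) borel (\<lambda>Y. Y rho)
      = bind ?M (\<lambda>Y. distr (stepK D fx ?P z Y) borel (\<lambda>Y. Y rho))"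
    using prob_proc[of D fx "zs @ rs"] \<open>rho \<in> ?P\<close>
    unfolding append_Cons proc_Cons by (intro distr_bind[OF k]) (auto simp: prob_space.not_empty)
  also have "\<dots> = bind ?M (\<lambda>Y. return borel (Y rho))"
  proof (intro bind_cong refl)
    fix Y assume Y: "Y \<in> space ?M"
    then have Ysp: "Y \<in> space (SP ?P)" by (simp add: space_proc)
    have "(\<lambda>_. Y) \<in> (borel :: real measure) \<rightarrow>\<^sub>M SP ?P" by (rule measurable_const[OF Ysp])
    from upd_meas[OF this, of "\<lambda>y. y" z] have m: "(\<lambda>y. Y(z:=y)) \<in> borel \<rightarrow>\<^sub>M SP (insert z ?P)"
      by simp
    have "prob_space (gauss (muS fx ?P Y z) (vS D ?P z))"
      using gauss_space by (simp add: space_prob_algebra)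
    then interpret prob_space "step_law D fx ?P Y z"
      by (simp add: step_law_eq)
    have "distr (stepK D fx ?P z Y) borel (\<lambda>Y. Y rho) = distr (step_law D fx ?P Y z) borel (\<lambda>_. Y rho)"
      unfolding stepK_def using Cons.prems \<open>rho \<in> ?P\<close> m
      by (subst distr_distr) (simp_all add: comp_def step_law_eq)
    also have "\<dots> = return borel (Y rho)" by (rule distr_const) simp
    finally show "distr (stepK D fx ?P z Y) borel (\<lambda>Y. Y rho) = return borel (Y rho)" .
  qed
  also have "\<dots> = distr ?M borel (\<lambda>Y. Y rho)"
    using prob_proc[of D fx "zs @ rs"] \<open>rho \<in> ?P\<close>
    by (intro bind_return_distr') (auto simp: prob_space.not_empty measurable_cong_sets[OF sets_proc refl])
  also have "\<dots> = distr (gauss_proc_rev D fx rs) borel (\<lambda>Y. Y rho)"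
    using Cons.prems by (intro Cons.IH) simp
  finally show ?case .
qed

lemma single_meas: "(\<lambda>y. (\<lambda>_. undefined)(r := y)) \<in> borel \<rightarrow>\<^sub>M SP {r}"
proof -
  have "(\<lambda>_. \<lambda>_. undefined) \<in> (borel :: real measure) \<rightarrow>\<^sub>M SP {}"
    by (rule measurable_const) (simp add: space_PiM)
  from upd_meas[OF this, of "\<lambda>y. y" r] show ?thesis by simp
qed

lemma part1:
  assumes "distinct rs" "\<forall>r\<in>set rs. 0 < r" "rho \<in> set rs"
  shows "distr (gauss_proc_rev D fx rs) borel (\<lambda>Y. Y rho) = gauss fx (D\<^sup>2 / (2 * rho))"
proof -
  let ?zs = "filter (\<lambda>r. r \<noteq> rho) rs"
  have "gauss_proc_rev D fx rs = gauss_proc_rev D fx (?zs @ [rho])"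
    using assms by (intro proc_perm) auto
  then have "distr (gauss_proc_rev D fx rs) borel (\<lambda>Y. Y rho) = distr (gauss_proc_rev D fx [rho]) borel (\<lambda>Y. Y rho)"
    using marg_keep[of rho "[rho]" ?zs D fx] by simp
  also have "\<dots> = distr (gauss fx (D\<^sup>2 / (2 * rho))) borel (\<lambda>y. y)"
    unfolding proc_single using single_meas[of rho]
    by (subst distr_distr) (auto simp: comp_def)
  also have "\<dots> = gauss fx (D\<^sup>2 / (2 * rho))" by (simp add: distr_id2)
  finally show ?thesis .
qed

primrec proc_from :: "real \<Rightarrow> real \<Rightarrow> (real \<Rightarrow> real) measure \<Rightarrow> real set \<Rightarrow> real list \<Rightarrow> (real \<Rightarrow> real) measure" where
  "proc_from D fx M0 P0 [] = M0"
| "proc_from D fx M0 P0 (r # rs) = bind (proc_from D fx M0 P0 rs) (stepK D fx (P0 \<union> set rs) r)"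

lemma proc_app: "gauss_proc_rev D fx (rs @ [m]) = proc_from D fx (gauss_proc_rev D fx [m]) {m} rs"
  by (induction rs) (simp_all add: proc_Cons)

lemma step_fx: "\<exists>p\<in>P. r < p \<Longrightarrow> step_law D fx P Y r = step_law D 0 P Y r"
  by (simp add: step_law_eq muS_def YH_def hiP_def)

lemma stepK_fx: "\<exists>p\<in>P. r < p \<Longrightarrow> stepK D fx P r = stepK D 0 P r"
  by (rule ext) (simp add: stepK_def step_fx[of P r D fx])

lemma proc_from_fx:
  "\<forall>r\<in>set rs. r < m \<Longrightarrow> m \<in> P0 \<Longrightarrow> proc_from D fx M0 P0 rs = proc_from D 0 M0 P0 rs"
proof (induction rs)
  case Nil then show ?case by simp
next
  case (Cons r rs)
  have "\<exists>p\<in>P0 \<union> set rs. r < p" using Cons.prems by auto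
  then show ?case using Cons by (simp add: stepK_fx[of "P0 \<union> set rs" r D fx])
qed

lemma proc_from_meas:
  assumes F: "F \<in> N \<rightarrow>\<^sub>M prob_algebra (SP P0)" and fin: "finite P0"
  shows "(\<lambda>y. proc_from D fx (F y) P0 rs) \<in> N \<rightarrow>\<^sub>M prob_algebra (SP (P0 \<union> set rs))"
proof (induction rs)
  case Nil then show ?case using F by simp
next
  case (Cons r rs)
  have "(\<lambda>y. bind (proc_from D fx (F y) P0 rs) (stepK D fx (P0 \<union> set rs) r)) \<in> N \<rightarrow>\<^sub>M prob_algebra (SP (insert r (P0 \<union> set rs)))"
    by (rule measurable_bind_prob_space[OF Cons stepK_meas]) (simp add: fin)
  then show ?case by simp
qed

lemma proc_from_bind:
  assumes N: "sets N = sets borel" "space N \<noteq> {}"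
    and F: "F \<in> borel \<rightarrow>\<^sub>M prob_algebra (SP P0)" and fin: "finite P0"
  shows "proc_from D fx (bind N F) P0 rs = bind N (\<lambda>y. proc_from D fx (F y) P0 rs)"
proof (induction rs)
  case Nil then show ?case by simp
next
  case (Cons r rs)
  have m1: "(\<lambda>y. proc_from D fx (F y) P0 rs) \<in> N \<rightarrow>\<^sub>M subprob_algebra (SP (P0 \<union> set rs))"
    using measurable_prob_algebraD[OF proc_from_meas[OF F fin]] by (simp add: measurable_cong_sets[OF N(1) refl])
  have m2: "stepK D fx (P0 \<union> set rs) r \<in> SP (P0 \<union> set rs) \<rightarrow>\<^sub>M subprob_algebra (SP (insert r (P0 \<union> set rs)))"
    by (rule measurable_prob_algebraD[OF stepK_meas]) (simp add: fin)
  show ?case using Cons by (simp only: proc_from.simps bind_assoc[OF m1 m2])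
qed

definition Kker :: "real \<Rightarrow> real set \<Rightarrow> real \<Rightarrow> (real \<Rightarrow> real) measure" where
  "Kker D S y = (if finite S \<and> S \<noteq> {}
     then proc_from D 0 (return (SP {Max S}) ((\<lambda>_. undefined)(Max S := y))) {Max S} (sorted_list_of_set (S - {Max S}))
     else return (SP S) (\<lambda>_. undefined))"

lemma Kker_meas: "Kker D S \<in> borel \<rightarrow>\<^sub>M prob_algebra (SP S)"
proof (cases "finite S \<and> S \<noteq> {}")
  case True
  let ?m = "Max S"
  have eq: "{?m} \<union> set (sorted_list_of_set (S - {?m})) = S"
  proof -
    have "?m \<in> S" using True by (intro Max_in) auto
    then show ?thesis using True by (simp add: insert_absorb)
  qed
  have F: "(\<lambda>y. return (SP {?m}) ((\<lambda>_. undefined)(?m := y))) \<in> borel \<rightarrow>\<^sub>M prob_algebra (SP {?m})"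
    by (rule measurable_compose[OF single_meas measurable_return_prob_space])
  have "(\<lambda>y. proc_from D 0 (return (SP {?m}) ((\<lambda>_. undefined)(?m := y))) {?m} (sorted_list_of_set (S - {?m})))
     \<in> borel \<rightarrow>\<^sub>M prob_algebra (SP ({?m} \<union> set (sorted_list_of_set (S - {?m}))))"
    by (rule proc_from_meas[OF F]) simp
  then show ?thesis using True unfolding eq by (simp add: Kker_def[abs_def])
next
  case False
  have "(\<lambda>_. undefined) \<in> space (SP S)" by (simp add: space_PiM PiE_def extensional_def)
  then have "return (SP S) (\<lambda>_. undefined) \<in> space (prob_algebra (SP S))"
    by (simp add: space_prob_algebra prob_space_return)
  moreover have "Kker D S = (\<lambda>_. return (SP S) (\<lambda>_. undefined))"
    using False by (auto simp: Kker_def fun_eq_iff)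
  ultimately show ?thesis by simp
qed

lemma part2:
  assumes "distinct rs" "rs \<noteq> []" "\<forall>r\<in>set rs. 0 < r"
  shows "gauss_proc_rev D fx rs = bind (distr (gauss_proc_rev D fx rs) borel (\<lambda>Y. Y (Max (set rs)))) (Kker D (set rs))"
proof -
  let ?S = "set rs" let ?m = "Max (set rs)"
  let ?ws = "sorted_list_of_set (?S - {?m})"
  let ?N = "gauss fx (D\<^sup>2 / (2 * ?m))"
  let ?g = "\<lambda>y. (\<lambda>_. undefined)(?m := y)"
  have mS: "?m \<in> ?S" using assms by simp
  have N: "distr (gauss_proc_rev D fx rs) borel (\<lambda>Y. Y ?m) = ?N"
    using assms mS by (intro part1)
  have Nsp: "space ?N \<noteq> {}" using gauss_space[of fx "D\<^sup>2 / (2 * ?m)"]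
    by (simp add: space_prob_algebra prob_space.not_empty)
  have "gauss_proc_rev D fx rs = gauss_proc_rev D fx (?ws @ [?m])"
    using assms mS by (intro proc_perm) auto
  also have "\<dots> = proc_from D fx (gauss_proc_rev D fx [?m]) {?m} ?ws"
    by (rule proc_app)
  also have "gauss_proc_rev D fx [?m] = bind ?N (\<lambda>y. return (SP {?m}) (?g y))"
    unfolding proc_single using Nsp single_meas by (intro bind_return_distr'[symmetric]) simp_all
  also have "proc_from D fx (bind ?N (\<lambda>y. return (SP {?m}) (?g y))) {?m} ?ws
      = bind ?N (\<lambda>y. proc_from D fx (return (SP {?m}) (?g y)) {?m} ?ws)"
    using Nsp by (intro proc_from_bind measurable_compose[OF single_meas measurable_return_prob_space]) simp_all
  also have "\<dots> = bind ?N (\<lambda>y. proc_from D 0 (return (SP {?m}) (?g y)) {?m} ?ws)"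
  proof (intro bind_cong refl proc_from_fx)
    show "\<forall>r\<in>set ?ws. r < ?m" using assms by (auto simp: order.not_eq_order_implies_strict)
  qed simp
  also have "\<dots> = bind ?N (Kker D ?S)"
    using assms by (intro bind_cong refl) (simp add: Kker_def)
  finally show ?thesis unfolding N .
qed

theorem corollary3p5:
  fixes nbr :: "'x \<Rightarrow> 'x \<Rightarrow> bool" and f :: "'x \<Rightarrow> real" and D :: real
  assumes "has_l2_sensitivity nbr f D"
  shows "lossless_multiple_release (gauss_proc D f) (gauss_mech D f)"
  unfolding lossless_multiple_release_def
proof (intro conjI allI impI)
  fix x :: 'x and rs :: "real list" and rho :: real assume a: "distinct rs \<and> (\<forall>r\<in>set rs. 0 < r) \<and> rho \<in> set rs"
  then show "distr (gauss_proc D f x rs) borel (\<lambda>Y. Y rho) = gauss_mech D f rho x"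
    unfolding gauss_proc_def gauss_mech_def by (intro part1) auto
next
  show "\<exists>K. (\<forall>S. K S \<in> borel \<rightarrow>\<^sub>M prob_algebra (SP S)) \<and>
        (\<forall>x rs. distinct rs \<and> rs \<noteq> [] \<and> (\<forall>r\<in>set rs. 0 < r) \<longrightarrow>
           gauss_proc D f x rs = bind (distr (gauss_proc D f x rs) borel (\<lambda>Y. Y (Max (set rs)))) (K (set rs)))"
  proof (intro exI[of _ "Kker D"] conjI allI impI)
    fix S show "Kker D S \<in> borel \<rightarrow>\<^sub>M prob_algebra (SP S)" by (rule Kker_meas)
  next
    fix x :: 'x and rs :: "real list" assume "distinct rs \<and> rs \<noteq> [] \<and> (\<forall>r\<in>set rs. 0 < r)"
    then show "gauss_proc D f x rs = bind (distr (gauss_proc D f x rs) borel (\<lambda>Y. Y (Max (set rs)))) (Kker D (set rs))"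
      unfolding gauss_proc_def using part2[of "rev rs" D "f x"] by simp
  qed
qed

end
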